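(* Let $G=(V,E)$ be a finite, simple, connected graph on $n=n(G)$ vertices with minimum degree $\delta$ and maximum degree $\Delta\ge 2$. Then \[ Z(G)=F_1(G)\le \frac{(\Delta-2)\,n-(\Delta-\delta)+2}{\Delta-1}. \]
   Context: All graphs are finite, simple and undirected. A set $S\subseteq V$ is a zero forcing set ($1$-forcing set) of $G$ if the following process colors every vertex: initially the vertices of $S$ are colored and all others uncolored; repeatedly, whenever a colored vertex has exactly one uncolored neighbor (at most one uncolored neighbor), that neighbor becomes colored. The zero forcing number $Z(G)=F_1(G)$ is the minimum cardinality of a zero forcing set of $G$. *)

theory Defs
  imports Complex_Main
begin

definition simple_graph :: "'a set \<Rightarrow> ('a \<Rightarrow> 'a \<Rightarrow> bool) \<Rightarrow> bool" where
  "simple_graph V E \<longleftrightarrow> finite V \<and> (\<forall>x y. E x y \<longrightarrow> E y x) \<and> (\<forall>x. \<not> E x x)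
     \<and> (\<forall>x y. E x y \<longrightarrow> x \<in> V \<and> y \<in> V)"

definition connected_graph :: "'a set \<Rightarrow> ('a \<Rightarrow> 'a \<Rightarrow> bool) \<Rightarrow> bool" where
  "connected_graph V E \<longleftrightarrow> V \<noteq> {} \<and>
     (\<forall>u\<in>V. \<forall>v\<in>V. (\<lambda>x y. E x y \<and> x \<in> V \<and> y \<in> V)\<^sup>*\<^sup>* u v)"

definition neighbors :: "'a set \<Rightarrow> ('a \<Rightarrow> 'a \<Rightarrow> bool) \<Rightarrow> 'a \<Rightarrow> 'a set" where
  "neighbors V E v = {u \<in> V. E v u}"

definition degree :: "'a set \<Rightarrow> ('a \<Rightarrow> 'a \<Rightarrow> bool) \<Rightarrow> 'a \<Rightarrow> nat" where
  "degree V E v = card (neighbors V E v)"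

definition max_degree :: "'a set \<Rightarrow> ('a \<Rightarrow> 'a \<Rightarrow> bool) \<Rightarrow> nat" where
  "max_degree V E = Max (degree V E ` V)"

definition min_degree :: "'a set \<Rightarrow> ('a \<Rightarrow> 'a \<Rightarrow> bool) \<Rightarrow> nat" where
  "min_degree V E = Min (degree V E ` V)"

text \<open>The set of vertices eventually coloured by the zero forcing process started
from S: the least set containing S and closed under the colour-change rule
(a coloured vertex whose neighbours other than w are all coloured colours w).
This is the (unique) final coloured set of the process.\<close>
inductive_set zf_closure :: "'a set \<Rightarrow> ('a \<Rightarrow> 'a \<Rightarrow> bool) \<Rightarrow> 'a set \<Rightarrow> 'a set"
  for V E S where
  init: "v \<in> S \<Longrightarrow> v \<in> zf_closure V E S"
| force: "u \<in> zf_closure V E S \<Longrightarrow> w \<in> neighbors V E u \<Longrightarrow>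
           (\<forall>x\<in>neighbors V E u. x \<noteq> w \<longrightarrow> x \<in> zf_closure V E S) \<Longrightarrow>
           w \<in> zf_closure V E S"

definition zero_forcing_set :: "'a set \<Rightarrow> ('a \<Rightarrow> 'a \<Rightarrow> bool) \<Rightarrow> 'a set \<Rightarrow> bool" where
  "zero_forcing_set V E S \<longleftrightarrow> S \<subseteq> V \<and> V \<subseteq> zf_closure V E S"

definition zero_forcing_number :: "'a set \<Rightarrow> ('a \<Rightarrow> 'a \<Rightarrow> bool) \<Rightarrow> nat" where
  "zero_forcing_number V E = Min {card S | S. zero_forcing_set V E S}"

end

theory Submission
  imports Defs
begin

lemma zf_mono:
  assumes "x \<in> zf_closure V E S" "S \<subseteq> T"
  shows "x \<in> zf_closure V E T"
  using assms
proof (induction rule: zf_closure.induct)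
  case (init v) then show ?case by (auto intro: zf_closure.init)
next
  case (force u w) then show ?case by (auto intro: zf_closure.force)
qed

lemma crossing:
  assumes "(\<lambda>x y. E x y \<and> x \<in> V \<and> y \<in> V)\<^sup>*\<^sup>* a b" "a \<in> C" "b \<notin> C"
  shows "\<exists>x y. E x y \<and> x \<in> C \<and> y \<notin> C \<and> y \<in> V"
  using assms
proof (induction rule: rtranclp_induct)
  case base then show ?case by simp
next
  case (step y z) then show ?case by (cases "y \<in> C") auto
qed

lemma grow:
  assumes sg: "simple_graph V E" and conn: "connected_graph V E"
    and D: "\<forall>v\<in>V. degree V E v \<le> Dg"
  shows "C \<noteq> {} \<Longrightarrow> S \<subseteq> C \<Longrightarrow> C \<subseteq> V \<Longrightarrow> C \<subseteq> zf_closure V E S \<Longrightarrow> (\<forall>u\<in>C. \<exists>x\<in>C. E u x)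
    \<Longrightarrow> (int Dg - 1) * (int (card C) - int (card S)) \<ge> int (card C) + K
    \<Longrightarrow> \<exists>S'. zero_forcing_set V E S' \<and> (int Dg - 1) * (int (card V) - int (card S')) \<ge> int (card V) + K"
proof (induction "card (V - C)" arbitrary: C S rule: less_induct)
  case less
  have finV: "finite V" using sg by (simp add: simple_graph_def)
  show ?case
  proof (cases "C = V")
    case True
    then show ?thesis using less.prems unfolding zero_forcing_set_def by (intro exI[of _ S]) auto
  next
    case False
    then obtain b where b: "b \<in> V" "b \<notin> C" using less.prems by auto
    obtain a where a: "a \<in> C"
      using less.prems(1) by blast
    have "(\<lambda>x y. E x y \<and> x \<in> V \<and> y \<in> V)\<^sup>*\<^sup>* a b"
      using conn a b less.prems(3) unfolding connected_graph_def by auto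
    then obtain u w where uw: "E u w" "u \<in> C" "w \<notin> C" "w \<in> V"
      using crossing[OF _ a b(2)] by blast
    obtain x where x: "x \<in> C" "E u x" using less.prems(5) uw by blast
    define U where "U = neighbors V E u - C"
    define S' where "S' = S \<union> (U - {w})"
    define C' where "C' = C \<union> U"
    have uV: "u \<in> V" using uw less.prems(3) by auto
    have xV: "x \<in> V" using x less.prems(3) by auto
    have finN: "finite (neighbors V E u)" using finV by (simp add: neighbors_def)
    have wU: "w \<in> U" using uw unfolding U_def neighbors_def by auto
    have UN: "U \<subseteq> neighbors V E u - {x}" using x unfolding U_def by auto
    have xN: "x \<in> neighbors V E u" using x xV by (simp add: neighbors_def)
    have cU: "card U \<le> Dg - 1"
    proof -
      have "card U \<le> card (neighbors V E u - {x})" using UN finN by (intro card_mono) auto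
      also have "\<dots> = degree V E u - 1" using xN finN by (simp add: degree_def)
      finally show ?thesis using D uV by auto
    qed
    have finU: "finite U" using finN U_def by auto
    have finC: "finite C" using finV less.prems(3) by (rule finite_subset[rotated])
    have disj: "C \<inter> U = {}" unfolding U_def by auto
    have cC': "card C' = card C + card U" unfolding C'_def using disj finU finC card_Un_disjoint by blast
    have "S \<inter> (U - {w}) = {}" using disj less.prems(2) by auto
    then have cS': "card S' = card S + (card U - 1)"
    proof -
      have fS: "finite S" using finC less.prems(2) by (rule finite_subset[rotated])
      have "card S' = card S + card (U - {w})"
        unfolding S'_def using fS finU \<open>S \<inter> (U - {w}) = {}\<close> by (intro card_Un_disjoint) auto
      moreover have "card (U - {w}) = card U - 1" by (rule card_Diff_singleton[OF wU])
      ultimately show ?thesis by simp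
    qed
    have cU1: "card U \<ge> 1"
    proof -
      have "card U > 0" using finU wU by (auto simp: card_gt_0_iff)
      then show ?thesis by simp
    qed
    have Dg1: "Dg \<ge> 1" using cU cU1 by auto
    have clos: "C' \<subseteq> zf_closure V E S'"
    proof
      fix y assume y: "y \<in> C'"
      have sub: "C \<subseteq> zf_closure V E S'"
        using less.prems(4) zf_mono[of _ V E S S'] unfolding S'_def by blast
      show "y \<in> zf_closure V E S'"
      proof (cases "y \<in> C")
        case True then show ?thesis using sub by auto
      next
        case False
        then have yU: "y \<in> U" using y C'_def by auto
        show ?thesis
        proof (cases "y = w")
          case False then show ?thesis using yU by (auto simp: S'_def intro: zf_closure.init)
        next
          case True
          show ?thesis unfolding True
          proof (rule zf_closure.force[of u])
            show "u \<in> zf_closure V E S'" using sub uw by auto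
            show "w \<in> neighbors V E u" using wU U_def by auto
            show "\<forall>x\<in>neighbors V E u. x \<noteq> w \<longrightarrow> x \<in> zf_closure V E S'"
            proof (intro ballI impI)
              fix x assume xn: "x \<in> neighbors V E u" "x \<noteq> w"
              show "x \<in> zf_closure V E S'"
              proof (cases "x \<in> C")
                case True then show ?thesis using sub by blast
              next
                case False
                then have "x \<in> S'" using xn unfolding S'_def U_def by blast
                then show ?thesis by (rule zf_closure.init)
              qed
            qed
          qed
        qed
      qed
    qed
    have adj: "\<forall>v\<in>C'. \<exists>y\<in>C'. E v y"
    proof
      fix v assume "v \<in> C'"
      then show "\<exists>y\<in>C'. E v y"
      proof (cases "v \<in> C")
        case True then show ?thesis using less.prems(5) C'_def by auto
      next
        case False
        then have "v \<in> U" using \<open>v \<in> C'\<close> C'_def by auto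
        then have "E u v" by (simp add: U_def neighbors_def)
        then have "E v u" using sg by (simp add: simple_graph_def)
        then show ?thesis using uw C'_def by auto
      qed
    qed
    have lt: "card (V - C') < card (V - C)"
    proof (rule psubset_card_mono)
      show "finite (V - C)" using finV by auto
      show "V - C' \<subset> V - C" using wU uw C'_def by auto
    qed
    have ineq: "(int Dg - 1) * (int (card C') - int (card S')) \<ge> int (card C') + K"
    proof -
      have e: "int (card C') - int (card S') = int (card C) - int (card S) + 1"
        using cC' cS' cU1 by auto
      have "int (card U) \<le> int Dg - 1" using cU Dg1 by auto
      then show ?thesis unfolding e using less.prems(6) cC' by (simp add: algebra_simps)
    qed
    have "S' \<subseteq> C'" using less.prems(2) unfolding S'_def C'_def by auto
    moreover have "C' \<subseteq> V" using less.prems(3) unfolding C'_def U_def neighbors_def by auto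
    moreover have "C' \<noteq> {}" using wU C'_def by auto
    ultimately show ?thesis using less.hyps[OF lt] clos adj ineq by blast
  qed
qed

theorem corollary1:
  fixes V :: "'a set" and E :: "'a \<Rightarrow> 'a \<Rightarrow> bool"
  assumes "simple_graph V E" and "connected_graph V E" and "max_degree V E \<ge> 2"
  shows "real (zero_forcing_number V E)
    \<le> ((real (max_degree V E) - 2) * real (card V) - (real (max_degree V E) - real (min_degree V E)) + 2)
       / (real (max_degree V E) - 1)"
proof -
  define Dg where "Dg = max_degree V E"
  define dl where "dl = min_degree V E"
  have sg: "simple_graph V E" by fact
  have finV: "finite V" using sg by (simp add: simple_graph_def)
  have Vne: "V \<noteq> {}" using assms(2) by (simp add: connected_graph_def)
  have D: "\<forall>v\<in>V. degree V E v \<le> Dg" unfolding Dg_def max_degree_def using finV by auto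
  obtain v0 where v0: "v0 \<in> V" "degree V E v0 = dl"
  proof -
    have "Min (degree V E ` V) \<in> degree V E ` V" using finV Vne by (intro Min_in) auto
    then show ?thesis using that unfolding dl_def min_degree_def by auto
  qed
  obtain z where z: "z \<in> V" "degree V E z = Dg"
  proof -
    have "Max (degree V E ` V) \<in> degree V E ` V" using finV Vne by (intro Max_in) auto
    then show ?thesis using that unfolding Dg_def max_degree_def by auto
  qed
  have "card (neighbors V E z) \<ge> 2" using z assms(3) Dg_def by (simp add: degree_def)
  then obtain y where y: "y \<in> neighbors V E z" "y \<noteq> v0"
  proof -
    have "neighbors V E z - {v0} \<noteq> {}"
    proof
      assume "neighbors V E z - {v0} = {}"
      then have "neighbors V E z \<subseteq> {v0}" by auto
      then have "card (neighbors V E z) \<le> card {v0}" by (intro card_mono) auto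
      then show False using \<open>card (neighbors V E z) \<ge> 2\<close> by simp
    qed
    then show ?thesis using that by blast
  qed
  have yV: "y \<in> V" using y by (simp add: neighbors_def)
  have "(\<lambda>x y. E x y \<and> x \<in> V \<and> y \<in> V)\<^sup>*\<^sup>* v0 y"
    using assms(2) v0 yV unfolding connected_graph_def by auto
  then obtain u w0 where "E u w0" "u \<in> {v0}" "w0 \<notin> {v0}" "w0 \<in> V"
    using crossing[of E V v0 y "{v0}"] y by auto
  then have w0: "E v0 w0" "w0 \<in> V" by auto
  define N0 where "N0 = neighbors V E v0"
  have w0N: "w0 \<in> N0" using w0 by (simp add: N0_def neighbors_def)
  have v0N: "v0 \<notin> N0" using sg by (simp add: N0_def neighbors_def simple_graph_def)
  have finN: "finite N0" using finV by (simp add: N0_def neighbors_def)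
  have cN: "card N0 = dl" using v0 by (simp add: N0_def degree_def)
  define S where "S = insert v0 (N0 - {w0})"
  define C where "C = insert v0 N0"
  have cC: "card C = dl + 1" using finN v0N cN by (simp add: C_def)
  have cS: "card S = dl" using finN v0N cN w0N
  proof -
    have "card (N0 - {w0}) = card N0 - 1" by (rule card_Diff_singleton[OF w0N])
    then have "card (N0 - {w0}) = dl - 1" unfolding cN .
    moreover have "dl \<ge> 1"
    proof -
      have "card N0 > 0" using finN w0N by (auto simp: card_gt_0_iff)
      then show ?thesis using cN by simp
    qed
    moreover have "v0 \<notin> N0 - {w0}" using v0N by auto
    ultimately show ?thesis using finN by (simp add: S_def)
  qed
  have c1: "C \<noteq> {}" by (auto simp: C_def)
  have c2: "S \<subseteq> C" by (auto simp: S_def C_def)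
  have c3: "C \<subseteq> V" using v0 by (auto simp: C_def N0_def neighbors_def)
  have c4: "C \<subseteq> zf_closure V E S"
  proof
    fix x assume "x \<in> C"
    show "x \<in> zf_closure V E S"
    proof (cases "x = w0")
      case False then show ?thesis using \<open>x \<in> C\<close> by (auto simp: C_def S_def intro: zf_closure.init)
    next
      case True
      show ?thesis unfolding True
        by (rule zf_closure.force[of v0]) (auto simp: S_def N0_def[symmetric] w0N intro: zf_closure.init)
    qed
  qed
  have c5: "\<forall>u\<in>C. \<exists>x\<in>C. E u x"
  proof
    fix u assume "u \<in> C"
    then show "\<exists>x\<in>C. E u x"
    proof (cases "u = v0")
      case True then show ?thesis using w0 w0N by (auto simp: C_def)
    next
      case False
      then have "E v0 u" using \<open>u \<in> C\<close> by (auto simp: C_def N0_def neighbors_def)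
      then have "E u v0" using sg by (simp add: simple_graph_def)
      then show ?thesis by (auto simp: C_def)
    qed
  qed
  have c6: "(int Dg - 1) * (int (card C) - int (card S)) \<ge> int (card C) + (int Dg - int dl - 2)"
  proof -
    have e: "int (card C) - int (card S) = 1" using cC cS by simp
    show ?thesis unfolding e using cC by simp
  qed
  have "\<exists>S'. zero_forcing_set V E S' \<and> (int Dg - 1) * (int (card V) - int (card S')) \<ge> int (card V) + (int Dg - int dl - 2)"
    by (rule grow[OF assms(1,2) D c1 c2 c3 c4 c5 c6])
  then obtain S' where S': "zero_forcing_set V E S'"
    "(int Dg - 1) * (int (card V) - int (card S')) \<ge> int (card V) + (int Dg - int dl - 2)"
    by blast
  have sub: "{card S | S. zero_forcing_set V E S} \<subseteq> {..card V}"
  proof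
    fix k assume "k \<in> {card S | S. zero_forcing_set V E S}"
    then obtain T where "k = card T" "T \<subseteq> V" by (auto simp: zero_forcing_set_def)
    then show "k \<in> {..card V}" using finV card_mono by auto
  qed
  have fin: "finite {card S | S. zero_forcing_set V E S}"
    using finite_subset[OF sub finite_atMost] .
  have Z: "zero_forcing_number V E \<le> card S'"
    unfolding zero_forcing_number_def using fin S'(1) by (intro Min_le) auto
  have Dg2: "Dg \<ge> 2" using assms(3) Dg_def by simp
  have "real (zero_forcing_number V E) * (real Dg - 1) \<le> real (card S') * (real Dg - 1)"
    using Z Dg2 by (intro mult_right_mono) auto
  also have "\<dots> \<le> (real Dg - 2) * real (card V) - (real Dg - real dl) + 2"
  proof -
    have "real_of_int ((int Dg - 1) * (int (card V) - int (card S'))) \<ge> real_of_int (int (card V) + (int Dg - int dl - 2))"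
      using S'(2) by linarith
    then show ?thesis by (simp add: algebra_simps)
  qed
  finally show ?thesis using Dg2 unfolding Dg_def[symmetric] dl_def[symmetric]
    by (simp add: pos_le_divide_eq)
qed

end
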